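(* For any finite simple graph $X$ and any update sequence $\pi\in S_X$, the mixed extended threshold SDS map $\mathbf{F}^\updownarrow_\pi$ has no periodic orbits of length $\ge 2$.
   Context: Let $X$ be a finite simple graph with vertices $1,\dots,n$; $d(v)$ is the degree of $v$ and $n[v]$ the closed neighborhood of $v$. An extended vertex state is $s_v=(x_v,k_v)\in\{0,1\}\times\{1,\dots,d(v)+1\}$; $\mathcal{S}$ is the product of these sets. Let $\sigma(x[v])=|\{u\in n[v]:x_u=1\}|$. The mixed vertex function maps $(x_v,k_v)$ to $(x_v',k_v')$ with $x_v'=1$ iff $\sigma(x[v])\ge k_v$ (else $0$), and $k_v'=k_v+1$ if $x_v=0$ and $\sigma(x[v])\ge k_v$; $k_v'=k_v-1$ if $x_v=1$ and $\sigma(x[v])<k_v$; $k_v'=k_v$ otherwise. The local map $F^\updownarrow_v$ updates only coordinate $v$ by this rule, and for a permutation $\pi=(\pi_1,\dots,\pi_n)$ of the vertices, $\mathbf{F}^\updownarrow_\pi=F^\updownarrow_{\pi_n}\circ\cdots\circ F^\updownarrow_{\pi_1}$. A periodic orbit of length $m$ is a cycle of $m$ distinct states under iteration. *)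

theory Defs
  imports Main
begin

definition simple_graph :: "nat \<Rightarrow> (nat \<Rightarrow> nat \<Rightarrow> bool) \<Rightarrow> bool" where
  "simple_graph n E \<longleftrightarrow> (\<forall>u v. E u v \<longrightarrow> E v u) \<and> (\<forall>v. \<not> E v v)
     \<and> (\<forall>u v. E u v \<longrightarrow> u \<in> {1..n} \<and> v \<in> {1..n})"

definition nbhd :: "nat \<Rightarrow> (nat \<Rightarrow> nat \<Rightarrow> bool) \<Rightarrow> nat \<Rightarrow> nat set" where
  "nbhd n E v = {u \<in> {1..n}. E v u}"

definition deg :: "nat \<Rightarrow> (nat \<Rightarrow> nat \<Rightarrow> bool) \<Rightarrow> nat \<Rightarrow> nat" where
  "deg n E v = card (nbhd n E v)"

definition cnbhd :: "nat \<Rightarrow> (nat \<Rightarrow> nat \<Rightarrow> bool) \<Rightarrow> nat \<Rightarrow> nat set" where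
  "cnbhd n E v = insert v (nbhd n E v)"

text \<open>A system state: vertex v has state (x v, k v) with x v :: bool
  (True = 1) and threshold k v.\<close>
type_synonym state = "(nat \<Rightarrow> bool) \<times> (nat \<Rightarrow> nat)"

definition state_space :: "nat \<Rightarrow> (nat \<Rightarrow> nat \<Rightarrow> bool) \<Rightarrow> state set" where
  "state_space n E = {(x, k). (\<forall>v\<in>{1..n}. 1 \<le> k v \<and> k v \<le> deg n E v + 1)
      \<and> (\<forall>v. v \<notin> {1..n} \<longrightarrow> x v = False \<and> k v = 1)}"

definition sigma :: "nat \<Rightarrow> (nat \<Rightarrow> nat \<Rightarrow> bool) \<Rightarrow> (nat \<Rightarrow> bool) \<Rightarrow> nat \<Rightarrow> nat" where
  "sigma n E x v = card {u \<in> cnbhd n E v. x u}"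

definition mixed_vertex :: "nat \<Rightarrow> (nat \<Rightarrow> nat \<Rightarrow> bool) \<Rightarrow> state \<Rightarrow> nat \<Rightarrow> bool \<times> nat" where
  "mixed_vertex n E s v =
     (let x = fst s; k = snd s; sg = sigma n E x v in
       (k v \<le> sg,
        if \<not> x v \<and> k v \<le> sg then k v + 1
        else if x v \<and> sg < k v then k v - 1
        else k v))"

definition local_map :: "nat \<Rightarrow> (nat \<Rightarrow> nat \<Rightarrow> bool) \<Rightarrow> nat \<Rightarrow> state \<Rightarrow> state" where
  "local_map n E v s =
     (let (a, b) = mixed_vertex n E s v in ((fst s)(v := a), (snd s)(v := b)))"

text \<open>SDS map F_pi = F_{pi_n} o ... o F_{pi_1}: apply pi_1 first.\<close>
definition sds_map :: "nat \<Rightarrow> (nat \<Rightarrow> nat \<Rightarrow> bool) \<Rightarrow> nat list \<Rightarrow> state \<Rightarrow> state" where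
  "sds_map n E \<pi> = fold (local_map n E) \<pi>"

definition periodic_orbit :: "(state \<Rightarrow> state) \<Rightarrow> state \<Rightarrow> nat \<Rightarrow> bool" where
  "periodic_orbit F s m \<longleftrightarrow> m \<ge> 1 \<and> (F ^^ m) s = s \<and> inj_on (\<lambda>i. (F ^^ i) s) {0..<m}"

end

theory Submission
  imports Defs
begin

definition Aq :: "nat \<Rightarrow> (nat\<Rightarrow>nat\<Rightarrow>bool) \<Rightarrow> (nat\<Rightarrow>bool) \<Rightarrow> int" where
 "Aq n E x = (\<Sum>w\<in>{1..n}. \<Sum>u\<in>{1..n}. if E w u \<and> x w \<and> x u then 1 else 0)"
definition Nq :: "nat \<Rightarrow> (nat\<Rightarrow>nat\<Rightarrow>bool) \<Rightarrow> (nat\<Rightarrow>bool) \<Rightarrow> nat \<Rightarrow> int" where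
 "Nq n E x v = (\<Sum>u\<in>{1..n}. if E v u \<and> x u then 1 else 0)"
definition Bq :: "nat \<Rightarrow> (nat\<Rightarrow>bool) \<Rightarrow> (nat \<Rightarrow> nat) \<Rightarrow> int" where
 "Bq n x k = (\<Sum>w\<in>{1..n}. if x w then 2*int(k w) - 3 else 0)"
definition Q :: "nat \<Rightarrow> (nat\<Rightarrow>nat\<Rightarrow>bool) \<Rightarrow> state \<Rightarrow> int" where
 "Q n E s = Aq n E (fst s) - Bq n (fst s) (snd s)"

lemma A_split:
  assumes g: "simple_graph n E" and v: "v \<in> {1..n}"
  shows "Aq n E x = Aq n E (x(v:=False)) + (if x v then 2 * Nq n E x v else 0)"
proof -
  have sym: "\<And>a b. E a b = E b a" and irr: "\<And>a. \<not> E a a"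
    using g unfolding simple_graph_def by blast+
  have pt: "\<And>w u. (if E w u \<and> x w \<and> x u then 1 else 0::int) =
     (if E w u \<and> (x(v:=False)) w \<and> (x(v:=False)) u then 1 else 0)
     + (if w = v then (if E v u \<and> x u \<and> x v then 1 else 0) else 0)
     + (if u = v then (if E v w \<and> x w \<and> x v then 1 else 0) else 0)"
    using sym irr by auto
  have "Aq n E x = Aq n E (x(v:=False))
     + (\<Sum>w\<in>{1..n}. \<Sum>u\<in>{1..n}. (if w = v then (if E v u \<and> x u \<and> x v then 1 else 0) else 0::int))
     + (\<Sum>w\<in>{1..n}. \<Sum>u\<in>{1..n}. (if u = v then (if E v w \<and> x w \<and> x v then 1 else 0) else 0::int))"
    unfolding Aq_def by (subst pt) (simp add: sum.distrib)
  also have "(\<Sum>w\<in>{1..n}. \<Sum>u\<in>{1..n}. (if w = v then (if E v u \<and> x u \<and> x v then 1 else 0) else 0::int))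
      = (if x v then Nq n E x v else 0)"
  proof -
    have "(\<Sum>w\<in>{1..n}. \<Sum>u\<in>{1..n}. (if w = v then (if E v u \<and> x u \<and> x v then 1 else 0) else 0::int))
       = (\<Sum>w\<in>{1..n}. if w = v then (\<Sum>u\<in>{1..n}. (if E v u \<and> x u \<and> x v then 1 else 0::int)) else 0)"
      by (rule sum.cong) auto
    also have "\<dots> = (\<Sum>u\<in>{1..n}. (if E v u \<and> x u \<and> x v then 1 else 0::int))"
      using v by (simp only: sum.delta finite_atLeastAtMost if_True)
    also have "\<dots> = (if x v then Nq n E x v else 0)"
      by (simp add: Nq_def)
    finally show ?thesis .
  qed
  also have "(\<Sum>w\<in>{1..n}. \<Sum>u\<in>{1..n}. (if u = v then (if E v w \<and> x w \<and> x v then 1 else 0) else 0::int))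
      = (if x v then Nq n E x v else 0)"
    using v by (simp add: Nq_def sym)
  finally show ?thesis by (cases "x v") (simp_all del: fun_upd_apply)
qed

lemma N_upd:
  assumes g: "simple_graph n E"
  shows "Nq n E (x(v:=b)) v = Nq n E x v"
proof -
  have irr: "\<And>a. \<not> E a a" using g unfolding simple_graph_def by blast
  show ?thesis unfolding Nq_def by (rule sum.cong) (use irr in auto)
qed

lemma B_split:
  assumes v: "v \<in> {1..n}"
  shows "Bq n x k = (\<Sum>w\<in>{1..n}-{v}. if x w then 2*int(k w) - 3 else 0)
     + (if x v then 2*int(k v) - 3 else 0)"
  unfolding Bq_def using v by (simp add: sum.remove)

lemma sigma_eq:
  assumes g: "simple_graph n E"
  shows "int (sigma n E x v) = (if x v then 1 else 0) + Nq n E x v"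
proof -
  have irr: "\<And>a. \<not> E a a" using g unfolding simple_graph_def by blast
  have "v \<notin> nbhd n E v" using irr by (simp add: nbhd_def)
  have fin: "finite (nbhd n E v)" by (simp add: nbhd_def)
  have "{u \<in> cnbhd n E v. x u} = (if x v then insert v {u \<in> nbhd n E v. x u} else {u \<in> nbhd n E v. x u})"
    by (auto simp: cnbhd_def)
  moreover have "int (card {u \<in> nbhd n E v. x u}) = Nq n E x v"
  proof -
    have "{u \<in> nbhd n E v. x u} = {u\<in>{1..n}. E v u \<and> x u}" by (auto simp: nbhd_def)
    then show ?thesis unfolding Nq_def
      by (simp add: sum.inter_filter[symmetric])
  qed
  ultimately show ?thesis using \<open>v \<notin> nbhd n E v\<close> fin
    unfolding sigma_def by auto
qed

lemma step:
  assumes g: "simple_graph n E" and v: "v \<in> {1..n}"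
  shows "local_map n E v s = s \<or> Q n E (local_map n E v s) > Q n E s"
proof -
  obtain x k where s: "s = (x, k)" by force
  define N where "N = Nq n E x v"
  have sg: "int (sigma n E x v) = (if x v then 1 else 0) + N"
    using sigma_eq[OF g] N_def by simp
  have N0: "N \<ge> 0" unfolding N_def Nq_def by (rule sum_nonneg) auto
  define R where "R = (\<Sum>w\<in>{1..n}-{v}. if x w then 2*int(k w) - 3 else 0)"
  have Rupd: "\<And>b j. (\<Sum>w\<in>{1..n}-{v}. if (x(v:=b)) w then 2*int((k(v:=j)) w) - 3 else 0) = R"
    unfolding R_def by (rule sum.cong) auto
  have Qform: "\<And>b j. Q n E (x(v:=b), k(v:=j)) = Aq n E (x(v:=False)) + (if b then 2*N else 0)
       - R - (if b then 2*int j - 3 else 0)"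
  proof -
    fix b j
    have "Aq n E (x(v:=b)) = Aq n E (x(v:=False)) + (if b then 2*N else 0)"
      using A_split[OF g v, of "x(v:=b)"] N_upd[OF g] N_def by simp
    moreover have "Bq n (x(v:=b)) (k(v:=j)) = R + (if b then 2*int j - 3 else 0)"
      using B_split[OF v, of "x(v:=b)" "k(v:=j)"] Rupd by simp
    ultimately show "?thesis b j" unfolding Q_def by simp
  qed
  have Qs: "Q n E s = Aq n E (x(v:=False)) + (if x v then 2*N else 0)
       - R - (if x v then 2*int (k v) - 3 else 0)"
    using Qform[of "x v" "k v"] s by simp
  show ?thesis
  proof (cases "\<not> x v \<and> k v \<le> sigma n E x v")
    case True
    have lm: "local_map n E v s = (x(v:=True), k(v:=k v + 1))"
      using True s by (simp add: local_map_def mixed_vertex_def)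
    have "int (k v) \<le> N" using True sg by simp
    then show ?thesis using lm Qform[of True "k v + 1"] Qs True by simp
  next
    case F1: False
    show ?thesis
    proof (cases "x v \<and> sigma n E x v < k v")
      case True
      have lm: "local_map n E v s = (x(v:=False), k(v:=k v - 1))"
        using True s by (simp add: local_map_def mixed_vertex_def)
      have "N + 1 < int (k v)" using True sg by simp
      then show ?thesis using lm Qform[of False "k v - 1"] Qs True by simp
    next
      case False
      have "local_map n E v s = (x(v:=x v), k(v:=k v))"
        using False F1 s by (auto simp: local_map_def mixed_vertex_def fun_upd_idem)
      then show ?thesis using s by simp
    qed
  qed
qed

lemma fold_step:
  assumes g: "simple_graph n E"
  shows "set vs \<subseteq> {1..n} \<Longrightarrow> Q n E (fold (local_map n E) vs s) \<ge> Q n E s \<and>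
     (fold (local_map n E) vs s \<noteq> s \<longrightarrow> Q n E (fold (local_map n E) vs s) > Q n E s)"
proof (induction vs arbitrary: s)
  case Nil then show ?case by simp
next
  case (Cons a vs)
  have a: "a \<in> {1..n}" using Cons.prems by simp
  have IH: "Q n E (fold (local_map n E) vs (local_map n E a s)) \<ge> Q n E (local_map n E a s) \<and>
     (fold (local_map n E) vs (local_map n E a s) \<noteq> local_map n E a s \<longrightarrow>
       Q n E (fold (local_map n E) vs (local_map n E a s)) > Q n E (local_map n E a s))"
    using Cons by simp
  from step[OF g a, of s] show ?case
  proof
    assume "local_map n E a s = s" then show ?thesis using IH by simp
  next
    assume "Q n E (local_map n E a s) > Q n E s" then show ?thesis using IH by auto
  qed
qed

theorem proposition3p6:
  fixes n :: nat and E :: "nat \<Rightarrow> nat \<Rightarrow> bool" and \<pi> :: "nat list" and s :: state and m :: nat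
  assumes "simple_graph n E"
    and "distinct \<pi>" and "set \<pi> = {1..n}"
    and "s \<in> state_space n E"
    and "periodic_orbit (sds_map n E \<pi>) s m"
  shows "m < 2"
proof (rule ccontr)
  assume "\<not> m < 2"
  then have m2: "m \<ge> 2" by simp
  define F where "F = sds_map n E \<pi>"
  have FS: "\<And>t. Q n E (F t) \<ge> Q n E t \<and> (F t \<noteq> t \<longrightarrow> Q n E (F t) > Q n E t)"
    unfolding F_def sds_map_def using fold_step[OF assms(1)] assms(3) by simp
  have iter: "\<And>j t. Q n E ((F ^^ j) t) \<ge> Q n E t"
  proof -
    fix j t show "Q n E ((F ^^ j) t) \<ge> Q n E t"
    proof (induction j)
      case 0 then show ?case by simp
    next
      case (Suc j) then show ?case using FS[of "(F^^j) t"] by simp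
    qed
  qed
  have per: "(F ^^ m) s = s" and inj: "inj_on (\<lambda>i. (F ^^ i) s) {0..<m}"
    using assms(5) unfolding periodic_orbit_def F_def by auto
  have ne: "F s \<noteq> s"
  proof
    assume "F s = s"
    then have "(\<lambda>i. (F ^^ i) s) 0 = (\<lambda>i. (F ^^ i) s) 1" by simp
    moreover have "(0::nat) \<in> {0..<m}" "(1::nat) \<in> {0..<m}" using m2 by auto
    ultimately have "(0::nat) = 1" using inj_onD[OF inj] by blast
    then show False by simp
  qed
  then have lt: "Q n E (F s) > Q n E s" using FS by blast
  obtain j where mj: "m = Suc j" using m2 by (cases m) auto
  have "(F ^^ m) s = (F ^^ j) (F s)"
    unfolding mj funpow_Suc_right by simp
  then have "Q n E ((F ^^ m) s) \<ge> Q n E (F s)" using iter by simp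
  then show False using per lt by simp
qed

end
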